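(* Let $R$ be a strongly $\pi$-$*$-regular ring and $e$ an idempotent of $R$. Then $eRe$, with the involution restricted from $R$, is strongly $\pi$-$*$-regular.
   Context: A $*$-ring is a ring with identity with an involution $*$. A projection is $p$ with $p^2=p=p^*$. A $*$-ring is strongly $\pi$-$*$-regular if for every $a$ there exist a projection $e'$, a unit $u$ and $m\ge1$ with $a^m=e'u$ and $a,e',u$ pairwise commuting. (In such a ring every idempotent is a projection, so $(eRe)^*=eRe$ and $eRe$ is a $*$-ring with identity $e$.) *)

theory Defs
  imports Main
begin

definition involution :: "('a::ring_1 \<Rightarrow> 'a) \<Rightarrow> bool" where
  "involution st \<longleftrightarrow>
     (\<forall>x y. st (x + y) = st x + st y) \<and>
     (\<forall>x y. st (x * y) = st y * st x) \<and>
     (\<forall>x. st (st x) = x)"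

text \<open>Strong pi-star-regularity of a ring with carrier S, identity e and involution st
  (S is assumed to be closed under the ring operations and st, with e the identity of S).\<close>
definition spsr_on :: "'a::ring_1 set \<Rightarrow> 'a \<Rightarrow> ('a \<Rightarrow> 'a) \<Rightarrow> bool" where
  "spsr_on S e st \<longleftrightarrow>
     (\<forall>a\<in>S. \<exists>p\<in>S. \<exists>u\<in>S. \<exists>m::nat. m \<ge> 1 \<and>
        p * p = p \<and> st p = p \<and>
        (\<exists>v\<in>S. u * v = e \<and> v * u = e) \<and>
        a ^ m = p * u \<and>
        a * p = p * a \<and> a * u = u * a \<and> p * u = u * p)"

definition strongly_pi_star_regular :: "('a::ring_1 \<Rightarrow> 'a) \<Rightarrow> bool" where
  "strongly_pi_star_regular st \<longleftrightarrow> involution st \<and> spsr_on UNIV 1 st"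

definition corner :: "'a::ring_1 \<Rightarrow> 'a set" where
  "corner e = {e * x * e | x. True}"

end

theory Submission
  imports Defs
begin

lemma corner_iff: "x \<in> corner e \<longleftrightarrow> e * x * e = x" if "e * e = e" for e x :: "'a::ring_1"
proof
  assume "x \<in> corner e"
  then obtain y where "x = e * y * e" by (auto simp: corner_def)
  then have "e * x * e = (e * e) * y * (e * e)" by (simp add: mult.assoc)
  then show "e * x * e = x" using that \<open>x = e * y * e\<close> by simp
next
  assume "e * x * e = x" then show "x \<in> corner e" unfolding corner_def by (metis (mono_tags, lifting) mem_Collect_eq)
qed

lemma inv_comm:
  fixes u v x :: "'a::ring_1"
  assumes "u * v = 1" "v * u = 1" "x * u = u * x"
  shows "x * v = v * x"
proof -
  have "v * x = v * x * (u * v)" using assms by simp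
  also have "\<dots> = v * (x * u) * v" by (simp add: mult.assoc)
  also have "\<dots> = (v * u) * x * v" using assms(3) by (simp add: mult.assoc)
  finally show ?thesis using assms by simp
qed

lemma idem_proj:
  fixes st :: "'a::ring_1 \<Rightarrow> 'a" and e :: 'a
  assumes "spsr_on UNIV 1 st" "e * e = e"
  shows "st e = e"
proof -
  obtain p u m v where m: "m \<ge> (1::nat)" and pp: "p * p = p" "st p = p"
    and uv: "u * v = 1" "v * u = 1" and em: "e ^ m = p * u"
    and c: "e * p = p * e" "e * u = u * e" "p * u = u * p"
    using assms(1) unfolding spsr_on_def by blast
  have epow: "e ^ m = e" using m
  proof (induction m)
    case 0 then show ?case by simp
  next
    case (Suc n) then show ?case using assms(2)
      by (cases "n = 0") (auto simp: power_Suc2)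
  qed
  have ev: "e * v = v * e" using inv_comm[OF uv c(2)] .
  have pe: "p = e * v"
  proof -
    have "e * v = p * u * v" using em epow by simp
    also have "\<dots> = p" using uv by (simp add: mult.assoc)
    finally show ?thesis by simp
  qed
  have 1: "p * e = e" using em epow pp by (metis mult.assoc)
  have 2: "p * e = p" using pe assms(2) ev by (metis mult.assoc)
  show ?thesis using 1 2 pp by simp
qed

lemma corner_unit:
  fixes e p X Y :: "'a::ring_1"
  assumes "e*e = e" "e*p = p" "p*e = p" "p*p = p" "X*Y = p"
    "X*e = X" "e*X = X" "X*p = X" "p*X = X" "e*Y = Y" "p*Y = Y" "Y*e = Y" "Y*p = Y"
  shows "(X + (e - p)) * (Y + (e - p)) = e"
  using assms by (simp add: distrib_left distrib_right right_diff_distrib left_diff_distrib)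

theorem corollary3p10:
  fixes st :: "'a::ring_1 \<Rightarrow> 'a" and e :: 'a
  assumes "strongly_pi_star_regular st"
    and "e * e = e"
  shows "st ` corner e \<subseteq> corner e \<and> spsr_on (corner e) e st"
proof
  have inv: "involution st" and sp: "spsr_on UNIV 1 st"
    using assms(1) unfolding strongly_pi_star_regular_def by auto
  have se: "st e = e" using idem_proj[OF sp assms(2)] .
  show "st ` corner e \<subseteq> corner e"
  proof
    fix y assume "y \<in> st ` corner e"
    then obtain x where y: "y = st (e * x * e)" by (auto simp: corner_def)
    have "y = e * st x * e" using y inv se unfolding involution_def by (simp add: mult.assoc)
    then show "y \<in> corner e" unfolding corner_def by blast
  qed
  show "spsr_on (corner e) e st"
    unfolding spsr_on_def
  proof
    fix a assume "a \<in> corner e"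
    hence aa: "e * a * e = a" using corner_iff assms(2) by blast
    have ea: "e * a = a" using aa assms(2) by (metis mult.assoc)
    have ae: "a * e = a" using aa assms(2) by (metis mult.assoc)
    obtain p u m v where m: "m \<ge> (1::nat)" and pp: "p * p = p" "st p = p"
      and uv: "u * v = 1" "v * u = 1" and am: "a ^ m = p * u"
      and c: "a * p = p * a" "a * u = u * a" "p * u = u * p"
      using sp unfolding spsr_on_def by blast
    have pv: "p * v = v * p" using inv_comm[OF uv c(3)] .
    have av: "a * v = v * a" using inv_comm[OF uv c(2)] .
    obtain k where k: "m = Suc k" using m by (cases m) auto
    have eam: "e * a ^ m = a ^ m" using ea k by (metis power_Suc mult.assoc)
    have ame: "a ^ m * e = a ^ m" using ae k by (metis power_Suc2 mult.assoc)
    have p_def: "p = a ^ m * v" using am uv by (simp add: mult.assoc)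
    have amv: "a ^ m * v = v * a ^ m"
    proof -
      have "\<And>n. a ^ n * v = v * a ^ n"
      proof -
        fix n show "a ^ n * v = v * a ^ n"
        proof (induction n)
          case (Suc n)
          have "a ^ Suc n * v = a * (a ^ n * v)" by (simp add: mult.assoc)
          also have "\<dots> = (a * v) * a ^ n" using Suc by (simp add: mult.assoc)
          also have "\<dots> = v * a ^ Suc n" using av by (simp add: mult.assoc)
          finally show ?case .
        qed simp
      qed
      then show ?thesis .
    qed
    have ep: "e * p = p" using p_def eam by (metis mult.assoc)
    have pe: "p * e = p" using p_def amv ame by (metis mult.assoc)
    define w where "w = p * u + (e - p)"
    define z where "z = p * v + (e - p)"
    have pue: "p * u * e = p * u" using c(3) pe by (metis mult.assoc)
    have epu: "e * (p * u) = p * u" using ep by (metis mult.assoc)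
    have pve: "p * v * e = p * v" using pv pe by (metis mult.assoc)
    have epv: "e * (p * v) = p * v" using ep by (metis mult.assoc)
    have pupv: "p * u * (p * v) = p"
    proof -
      have "p * u * (p * v) = p * (u * p) * v" by (simp add: mult.assoc)
      also have "\<dots> = p * (p * u) * v" using c(3) by simp
      also have "\<dots> = p * p * (u * v)" by (simp add: mult.assoc)
      finally show ?thesis using pp uv by simp
    qed
    have pvpu: "p * v * (p * u) = p"
    proof -
      have "p * v * (p * u) = p * (v * p) * u" by (simp add: mult.assoc)
      also have "\<dots> = p * (p * v) * u" using pv by simp
      also have "\<dots> = p * p * (v * u)" by (simp add: mult.assoc)
      finally show ?thesis using pp uv by simp
    qed
    have ee: "e * e = e" by fact
    have pup: "p * u * p = p * u" using c(3) pp by (metis mult.assoc)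
    have ppu: "p * (p * u) = p * u" using pp by (metis mult.assoc)
    have pvp: "p * v * p = p * v" using pv pp by (metis mult.assoc)
    have ppv: "p * (p * v) = p * v" using pp by (metis mult.assoc)
    have wz: "w * z = e" unfolding w_def z_def
      by (rule corner_unit) (use ee ep pe pp pupv pue epu pup ppu epv ppv pve pvp in auto)
    have zw: "z * w = e" unfolding w_def z_def
      by (rule corner_unit) (use ee ep pe pp pvpu pue epu pup ppu epv ppv pve pvp in auto)
    have amw: "a ^ m = p * w"
      unfolding w_def by (simp add: distrib_left right_diff_distrib ep pe pp ppu am)
    have wc: "w \<in> corner e" unfolding corner_iff[OF ee] w_def
      by (simp add: distrib_left distrib_right right_diff_distrib left_diff_distrib ep pe ee epu)
        (metis pue epu mult.assoc)
    have zc: "z \<in> corner e" unfolding corner_iff[OF ee] z_def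
      by (simp add: distrib_left distrib_right right_diff_distrib left_diff_distrib ep pe ee epv)
        (metis pve epv mult.assoc)
    have pc: "p \<in> corner e" unfolding corner_iff[OF ee] using ep pe by simp
    have aw: "a * w = w * a"
    proof -
      have "a * (p * u) = p * u * a" using c by (metis mult.assoc)
      then show ?thesis unfolding w_def by (simp add: algebra_simps ea ae c(1))
    qed
    have pw: "p * w = w * p"
      unfolding w_def by (simp add: distrib_left distrib_right right_diff_distrib left_diff_distrib ep pe pp ppu pup)
    show "\<exists>p\<in>corner e. \<exists>u\<in>corner e. \<exists>m. 1 \<le> m \<and> p * p = p \<and> st p = p \<and>
          (\<exists>v\<in>corner e. u * v = e \<and> v * u = e) \<and> a ^ m = p * u \<and>
          a * p = p * a \<and> a * u = u * a \<and> p * u = u * p"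
      using pc wc zc m pp wz zw amw c(1) aw pw by blast
  qed
qed

end
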